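(* Let $g\ge0$, let $\mu,\nu$ be partitions of $n\ge1$ with $g-1+\ell(\mu)+\ell(\nu)>0$, and let $\Gamma$ be a twisted monodromy graph of type $(g,\mu,\nu)$. Then $\Gamma$ has at most $g+1$ $4$-valent vertices.
   Context: A twisted monodromy graph of type $(g,\mu,\nu)$ is a connected directed graph $\Gamma$ of genus (first Betti number) $g$ whose inner vertices are $3$- or $4$-valent, together with an involution $\iota$ of $\Gamma$ whose fixed points are exactly the $4$-valent vertices, such that: $\Gamma$ has $2\ell(\mu)$ inward ends with weights $\mu_i$ and $2\ell(\nu)$ outward ends with weights $\nu_j$, ends exchanged by $\iota$ having the same weight; no inner vertex is a sink or a source; every bounded edge carries a positive integer weight satisfying balancing (at each inner vertex the weights of incoming edges sum to the weights of outgoing edges); the four edges at a $4$-valent vertex have the same weight; $\iota$ preserves weights; and the $\iota$-orbits of inner vertices are totally ordered compatibly with the edge directions. *)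

theory Defs
  imports Main "HOL-Library.Multiset"
begin

definition is_partition :: "nat multiset \<Rightarrow> nat \<Rightarrow> bool" where
  "is_partition \<mu> n \<longleftrightarrow> 0 \<notin># \<mu> \<and> sum_mset \<mu> = n"

text \<open>Ends are modelled as edges
  incident to a 1-valent (leaf) vertex; the inner vertices are the vertices of
  valence different from 1.\<close>

definition valence :: "'e set \<Rightarrow> ('e \<Rightarrow> 'v) \<Rightarrow> ('e \<Rightarrow> 'v) \<Rightarrow> 'v \<Rightarrow> nat" where
  "valence E src tgt v = card {e \<in> E. src e = v} + card {e \<in> E. tgt e = v}"

definition inner_vertices :: "'v set \<Rightarrow> 'e set \<Rightarrow> ('e \<Rightarrow> 'v) \<Rightarrow> ('e \<Rightarrow> 'v) \<Rightarrow> 'v set" where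
  "inner_vertices V E src tgt = {v \<in> V. valence E src tgt v \<noteq> 1}"

definition leaf_vertices :: "'v set \<Rightarrow> 'e set \<Rightarrow> ('e \<Rightarrow> 'v) \<Rightarrow> ('e \<Rightarrow> 'v) \<Rightarrow> 'v set" where
  "leaf_vertices V E src tgt = {v \<in> V. valence E src tgt v = 1}"

definition in_ends :: "'v set \<Rightarrow> 'e set \<Rightarrow> ('e \<Rightarrow> 'v) \<Rightarrow> ('e \<Rightarrow> 'v) \<Rightarrow> 'e set" where
  "in_ends V E src tgt = {e \<in> E. src e \<in> leaf_vertices V E src tgt}"

definition out_ends :: "'v set \<Rightarrow> 'e set \<Rightarrow> ('e \<Rightarrow> 'v) \<Rightarrow> ('e \<Rightarrow> 'v) \<Rightarrow> 'e set" where
  "out_ends V E src tgt = {e \<in> E. tgt e \<in> leaf_vertices V E src tgt}"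

definition connected_graph :: "'v set \<Rightarrow> 'e set \<Rightarrow> ('e \<Rightarrow> 'v) \<Rightarrow> ('e \<Rightarrow> 'v) \<Rightarrow> bool" where
  "connected_graph V E src tgt \<longleftrightarrow>
     (\<forall>u\<in>V. \<forall>v\<in>V. (u, v) \<in> ({(src e, tgt e) | e. e \<in> E} \<union> {(tgt e, src e) | e. e \<in> E})\<^sup>*)"

definition betti :: "'v set \<Rightarrow> 'e set \<Rightarrow> int" where
  "betti V E = int (card E) - int (card V) + 1"

text \<open>The total order on the
  iota-orbits of inner vertices compatible with edge directions is encoded by a
  rank function r on inner vertices whose fibres are exactly the iota-orbits and
  which strictly increases along every edge between inner vertices.\<close>
definition twisted_monodromy_graph ::
  "nat \<Rightarrow> nat multiset \<Rightarrow> nat multiset \<Rightarrow> 'v set \<Rightarrow> 'e set \<Rightarrow> ('e \<Rightarrow> 'v) \<Rightarrow> ('e \<Rightarrow> 'v)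
     \<Rightarrow> ('e \<Rightarrow> nat) \<Rightarrow> ('v \<Rightarrow> 'v) \<Rightarrow> ('e \<Rightarrow> 'e) \<Rightarrow> bool" where
  "twisted_monodromy_graph g \<mu> \<nu> V E src tgt w iV iE \<longleftrightarrow>
     (let IV = inner_vertices V E src tgt;
          Ein = in_ends V E src tgt;
          Eout = out_ends V E src tgt
      in
     \<comment> \<open>finite directed graph with ends\<close>
     finite V \<and> finite E \<and> (\<forall>e\<in>E. src e \<in> V \<and> tgt e \<in> V) \<and>
     (\<forall>e\<in>E. src e \<in> IV \<or> tgt e \<in> IV) \<and>
     \<comment> \<open>connected, of genus g\<close>
     connected_graph V E src tgt \<and> betti V E = int g \<and>
     \<comment> \<open>inner vertices are 3- or 4-valent\<close>
     (\<forall>v\<in>IV. valence E src tgt v = 3 \<or> valence E src tgt v = 4) \<and>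
     \<comment> \<open>iota is an involutive automorphism of the directed graph\<close>
     (\<forall>v\<in>V. iV v \<in> V \<and> iV (iV v) = v) \<and>
     (\<forall>e\<in>E. iE e \<in> E \<and> iE (iE e) = e \<and> src (iE e) = iV (src e) \<and> tgt (iE e) = iV (tgt e)) \<and>
     \<comment> \<open>fixed points of iota are exactly the 4-valent vertices\<close>
     (\<forall>v\<in>V. iV v = v \<longleftrightarrow> v \<in> IV \<and> valence E src tgt v = 4) \<and>
     (\<forall>e\<in>E. iE e \<noteq> e) \<and>
     \<comment> \<open>iota preserves weights; weights are positive\<close>
     (\<forall>e\<in>E. w (iE e) = w e) \<and> (\<forall>e\<in>E. 0 < w e) \<and>
     \<comment> \<open>2 l(mu) inward ends of weights mu_i (each twice), 2 l(nu) outward ends of weights nu_j\<close>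
     image_mset w (mset_set Ein) = \<mu> + \<mu> \<and>
     image_mset w (mset_set Eout) = \<nu> + \<nu> \<and>
     \<comment> \<open>no inner vertex is a sink or a source\<close>
     (\<forall>v\<in>IV. (\<exists>e\<in>E. tgt e = v) \<and> (\<exists>e\<in>E. src e = v)) \<and>
     \<comment> \<open>balancing\<close>
     (\<forall>v\<in>IV. (\<Sum>e\<in>{e\<in>E. tgt e = v}. w e) = (\<Sum>e\<in>{e\<in>E. src e = v}. w e)) \<and>
     \<comment> \<open>the four edges at a 4-valent vertex have the same weight\<close>
     (\<forall>v\<in>IV. valence E src tgt v = 4 \<longrightarrow>
        (\<forall>e\<in>E. \<forall>e'\<in>E. (src e = v \<or> tgt e = v) \<longrightarrow> (src e' = v \<or> tgt e' = v) \<longrightarrow> w e = w e')) \<and>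
     \<comment> \<open>iota-orbits of inner vertices totally ordered compatibly with edge directions\<close>
     (\<exists>r :: 'v \<Rightarrow> nat.
        (\<forall>u\<in>IV. \<forall>v\<in>IV. r u = r v \<longleftrightarrow> (v = u \<or> v = iV u)) \<and>
        (\<forall>e\<in>E. src e \<in> IV \<longrightarrow> tgt e \<in> IV \<longrightarrow> r (src e) < r (tgt e))))"

end

theory Submission
  imports Defs
begin

lemma conn_card:
  fixes V :: "'a set" and P :: "('a \<times> 'a) set"
  assumes fin: "finite V" and PV: "P \<subseteq> V \<times> V"
    and conn: "\<forall>u\<in>V. \<forall>v\<in>V. (u, v) \<in> (P \<union> P\<inverse>)\<^sup>*"
  shows "card V \<le> card P + 1"
proof (cases "V = {}")
  case True then show ?thesis by simp
next
  case False
  then obtain v0 where v0: "v0 \<in> V" by auto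
  define R where "R = P \<union> P\<inverse>"
  define d where "d u = (LEAST n. (v0, u) \<in> R ^^ n)" for u
  have finP: "finite P" using PV fin finite_subset by blast
  have dR: "(v0, u) \<in> R ^^ d u" if "u \<in> V" for u
  proof -
    have "(v0, u) \<in> R\<^sup>*" using conn v0 that unfolding R_def by blast
    then obtain n where "(v0, u) \<in> R ^^ n" using rtrancl_power by blast
    then show ?thesis unfolding d_def by (rule LeastI)
  qed
  have ex: "\<exists>p. p \<in> P \<and> (\<exists>x. (p = (x, u) \<or> p = (u, x)) \<and> Suc (d x) = d u)"
    if u: "u \<in> V" "u \<noteq> v0" for u
  proof -
    have "d u \<noteq> 0" using dR[OF u(1)] u(2) by (metis pair_in_Id_conv relpow.simps(1))
    then obtain m where m: "d u = Suc m" using not0_implies_Suc by blast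
    then obtain x where x1: "(v0, x) \<in> R ^^ m" and x2: "(x, u) \<in> R"
      using dR[OF u(1)] by (metis relpow_Suc_E)
    have le: "d x \<le> m" unfolding d_def using x1 by (rule Least_le)
    have "(v0, u) \<in> R ^^ Suc (d x)"
    proof -
      have "(v0, x) \<in> R ^^ d x" unfolding d_def using x1 by (rule LeastI)
      then show ?thesis using x2 by auto
    qed
    then have "d u \<le> Suc (d x)" unfolding d_def by (rule Least_le)
    with le m have "Suc (d x) = d u" by simp
    with x2 show ?thesis unfolding R_def by blast
  qed
  define f where "f u = (SOME p. p \<in> P \<and> (\<exists>x. (p = (x, u) \<or> p = (u, x)) \<and> Suc (d x) = d u))" for u
  have fP: "f u \<in> P \<and> (\<exists>x. (f u = (x, u) \<or> f u = (u, x)) \<and> Suc (d x) = d u)"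
    if "u \<in> V" "u \<noteq> v0" for u
    unfolding f_def using someI_ex[OF ex[OF that]] .
  have inj: "inj_on f (V - {v0})"
  proof (rule inj_onI)
    fix a b assume a: "a \<in> V - {v0}" and b: "b \<in> V - {v0}" and eq: "f a = f b"
    obtain x where x: "f a = (x, a) \<or> f a = (a, x)" "Suc (d x) = d a" using fP a by blast
    obtain y where y: "f b = (y, b) \<or> f b = (b, y)" "Suc (d y) = d b" using fP b by blast
    show "a = b" using x y eq by auto
  qed
  have "f ` (V - {v0}) \<subseteq> P" using fP by blast
  then have "card (V - {v0}) \<le> card P"
    using card_inj_on_le[OF inj _ finP] by blast
  then show ?thesis using v0 fin by (simp add: card_Diff_singleton)
qed

theorem lemma6p5:
  fixes g n :: nat and \<mu> \<nu> :: "nat multiset"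
    and V :: "'v set" and E :: "'e set" and src tgt :: "'e \<Rightarrow> 'v"
    and w :: "'e \<Rightarrow> nat" and iV :: "'v \<Rightarrow> 'v" and iE :: "'e \<Rightarrow> 'e"
  assumes "1 \<le> n"
    and "is_partition \<mu> n" and "is_partition \<nu> n"
    and "int g - 1 + int (size \<mu>) + int (size \<nu>) > 0"
    and "twisted_monodromy_graph g \<mu> \<nu> V E src tgt w iV iE"
  shows "card {v \<in> inner_vertices V E src tgt. valence E src tgt v = 4} \<le> g + 1"
proof -
  note T = assms(5)[unfolded twisted_monodromy_graph_def Let_def]
  have finV: "finite V" and finE: "finite E" and ends: "\<forall>e\<in>E. src e \<in> V \<and> tgt e \<in> V"
    and conn: "connected_graph V E src tgt" and bet: "betti V E = int g"
    and iVV: "\<forall>v\<in>V. iV v \<in> V \<and> iV (iV v) = v"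
    and iEE: "\<forall>e\<in>E. iE e \<in> E \<and> iE (iE e) = e \<and> src (iE e) = iV (src e) \<and> tgt (iE e) = iV (tgt e)"
    and fixV: "\<forall>v\<in>V. iV v = v \<longleftrightarrow> v \<in> inner_vertices V E src tgt \<and> valence E src tgt v = 4"
    and fixE: "\<forall>e\<in>E. iE e \<noteq> e"
    using T by auto
  define Fx where "Fx = {v \<in> V. iV v = v}"
  define Fr where "Fr = {v \<in> V. iV v \<noteq> v}"
  have bFx: "{v \<in> inner_vertices V E src tgt. valence E src tgt v = 4} = Fx"
    using fixV unfolding Fx_def inner_vertices_def by auto
  define q where "q v = {v, iV v}" for v
  define qE where "qE e = {e, iE e}" for e
  define f where "f e = (q (src e), q (tgt e))" for e
  define P where "P = f ` E"
  have qi: "q (iV v) = q v" if "v \<in> V" for v using iVV that unfolding q_def by auto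
  have fi: "f (iE e) = f e" if "e \<in> E" for e
    using iEE ends that qi unfolding f_def by auto
  have PV: "P \<subseteq> q ` V \<times> q ` V" unfolding P_def f_def using ends by auto
  have connq: "\<forall>u\<in>q ` V. \<forall>v\<in>q ` V. (u, v) \<in> (P \<union> P\<inverse>)\<^sup>*"
  proof (intro ballI)
    fix u v assume "u \<in> q ` V" "v \<in> q ` V"
    then obtain a b where ab: "a \<in> V" "b \<in> V" "u = q a" "v = q b" by auto
    have "(a, b) \<in> ({(src e, tgt e) | e. e \<in> E} \<union> {(tgt e, src e) | e. e \<in> E})\<^sup>*"
      using conn ab unfolding connected_graph_def by blast
    then have "(q a, q b) \<in> (P \<union> P\<inverse>)\<^sup>*"
    proof (induction rule: rtrancl_induct)
      case base then show ?case by simp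
    next
      case (step y z)
      then have "(q y, q z) \<in> P \<union> P\<inverse>" unfolding P_def f_def by auto
      with step.IH show ?case by (rule rtrancl_into_rtrancl)
    qed
    then show "(u, v) \<in> (P \<union> P\<inverse>)\<^sup>*" using ab by simp
  qed
  have c1: "card (q ` V) \<le> card P + 1"
    by (rule conn_card[OF _ PV connq]) (simp add: finV)
  define h where "h Q = f (SOME e. e \<in> Q)" for Q
  have "P = h ` (qE ` E)"
  proof -
    have "h (qE e) = f e" if "e \<in> E" for e
    proof -
      have "(SOME x. x \<in> qE e) \<in> qE e" by (rule someI[of _ e]) (simp add: qE_def)
      then show ?thesis unfolding h_def qE_def using fi[OF that] by auto
    qed
    then show ?thesis unfolding P_def by (auto simp: image_image)
  qed
  then have c2: "card P \<le> card (qE ` E)" by (simp add: card_image_le finE)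
  have c3: "2 * card (qE ` E) = card E"
  proof -
    have "2 * card (qE ` E) = card (\<Union> (qE ` E))"
    proof (rule card_partition)
      show "finite (qE ` E)" using finE by simp
      show "finite (\<Union> (qE ` E))" using finE unfolding qE_def by auto
      show "\<And>c. c \<in> qE ` E \<Longrightarrow> card c = 2" using fixE unfolding qE_def by auto
      show "\<And>c1 c2. c1 \<in> qE ` E \<Longrightarrow> c2 \<in> qE ` E \<Longrightarrow> c1 \<noteq> c2 \<Longrightarrow> c1 \<inter> c2 = {}"
        using iEE unfolding qE_def by (auto, metis+)
    qed
    also have "\<Union> (qE ` E) = E" using iEE unfolding qE_def by auto
    finally show ?thesis .
  qed
  have c4: "2 * card (q ` Fr) = card Fr"
  proof -
    have "2 * card (q ` Fr) = card (\<Union> (q ` Fr))"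
    proof (rule card_partition)
      show "finite (q ` Fr)" using finV unfolding Fr_def by simp
      show "finite (\<Union> (q ` Fr))" using finV unfolding q_def Fr_def by auto
      show "\<And>c. c \<in> q ` Fr \<Longrightarrow> card c = 2" unfolding q_def Fr_def by auto
      show "\<And>c1 c2. c1 \<in> q ` Fr \<Longrightarrow> c2 \<in> q ` Fr \<Longrightarrow> c1 \<noteq> c2 \<Longrightarrow> c1 \<inter> c2 = {}"
        using iVV unfolding q_def Fr_def by (auto, metis+)
    qed
    also have "\<Union> (q ` Fr) = Fr" using iVV unfolding q_def Fr_def by auto
    finally show ?thesis .
  qed
  have c5: "card (q ` Fx) = card Fx"
    by (rule card_image) (auto simp: inj_on_def q_def Fx_def)
  have c6: "card (q ` V) = card (q ` Fx) + card (q ` Fr)"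
  proof -
    have "q ` V = q ` Fx \<union> q ` Fr" unfolding Fx_def Fr_def by auto
    moreover have "q ` Fx \<inter> q ` Fr = {}" unfolding Fx_def Fr_def q_def by (auto simp: doubleton_eq_iff)
    moreover have "finite (q ` Fx)" "finite (q ` Fr)" using finV unfolding Fx_def Fr_def by auto
    ultimately show ?thesis by (simp add: card_Un_disjoint)
  qed
  have c7: "card V = card Fx + card Fr"
  proof -
    have "V = Fx \<union> Fr" "Fx \<inter> Fr = {}" unfolding Fx_def Fr_def by auto
    moreover have "finite Fx" "finite Fr" using finV unfolding Fx_def Fr_def by auto
    ultimately show ?thesis by (simp add: card_Un_disjoint)
  qed
  have "int (card E) - int (card V) + 1 = int g" using bet unfolding betti_def .
  then show ?thesis unfolding bFx using c1 c2 c3 c4 c5 c6 c7 by linarith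
qed

end
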